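(* Let $A\in\mathbb R^{m\times d}$, $B\in\mathbb R^{\ell\times d}$ with $\ker B=\{0\}$, and let $v\in\mathbb S^{d-1}$ be such that $v$ is not a generalized eigenvector of $(A^TA,B^TB)$. Let $x\sim\mathcal U(\mathbb S^{d-1})$ and set $a=\|Av\|^2$, $b=\langle Av,Ax\rangle$, $c=\|Ax\|^2$, $d_v=\|Bv\|^2$, $e=\langle Bv,Bx\rangle$, $f_x=\|Bx\|^2$, $\alpha=bd_v-ae$, $\gamma=ce-bf_x$. Then almost surely $\gamma\neq0$ and $\alpha\neq0$.
   Context: A generalized eigenvector of $(A^TA,B^TB)$ is a vector $w\neq0$ with $A^TAw=\lambda B^TBw$ for some $\lambda\in\mathbb R$. $\mathcal U(\mathbb S^{d-1})$ is the uniform probability measure on the Euclidean unit sphere $\mathbb S^{d-1}\subset\mathbb R^d$. *)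

theory Defs
  imports "HOL-Analysis.Analysis"
begin

definition gen_eigvec :: "real^'n^'n \<Rightarrow> real^'n^'n \<Rightarrow> real^'n \<Rightarrow> bool" where
  "gen_eigvec M N w \<longleftrightarrow> w \<noteq> 0 \<and> (\<exists>lam::real. M *v w = lam *\<^sub>R (N *v w))"

definition unif_sphere :: "('a::euclidean_space) measure" where
  "unif_sphere = distr (uniform_measure lborel (ball 0 1)) borel (\<lambda>x. x /\<^sub>R norm x)"

end

theory Submission
  imports Defs
begin


lemma mv_has_derivative[derivative_intros]:
  fixes A :: "real^'n^'m"
  shows "((\<lambda>x. A *v x) has_derivative (\<lambda>h. A *v h)) F"
  by (rule bounded_linear_imp_has_derivative[OF matrix_vector_mul_bounded_linear])

lemma negl_zero_deriv:
  fixes g h :: "'a::euclidean_space \<Rightarrow> real"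
  assumes der: "\<And>x. \<exists>D. (g has_derivative D) (at x) \<and> D u = h x" and u: "u \<noteq> 0"
  shows "negligible {x. g x = 0 \<and> h x \<noteq> 0}"
proof -
  obtain g' where g': "\<And>x. (g has_derivative g' x) (at x)" "\<And>x. g' x u = h x"
    using der by metis
  define S where "S = {x. g' x u \<noteq> 0}"
  define f where "f = (\<lambda>x. x + (g x - (u \<bullet> x)/(u \<bullet> u)) *\<^sub>R u)"
  define f' where "f' = (\<lambda>x k. k + (g' x k - (u \<bullet> k)/(u \<bullet> u)) *\<^sub>R u)"
  have derf0: "(f has_derivative f' x) (at x)" for x
    unfolding f_def f'_def using u by (auto intro!: derivative_eq_intros g')
  have lin: "linear (g' x)" for x using g'(1) has_derivative_linear by blast
  have uu: "u \<bullet> u \<noteq> 0" using u by simp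
  have inj: "inj (f' x)" if "x \<in> S" for x
  proof -
    have "linear (f' x)" using derf0 has_derivative_linear by blast
    moreover have "k = 0" if k: "f' x k = 0" for k
    proof -
      define c where "c = g' x k - (u \<bullet> k)/(u \<bullet> u)"
      have hk: "k = (- c) *\<^sub>R u" using k unfolding f'_def c_def
        by (metis add.commute add_left_imp_eq diff_add_cancel scaleR_minus_left diff_0)
      have "g' x k = - c * g' x u" using hk lin[of x] by (simp add: linear_scale linear_cmul linear_neg)
      moreover have "u \<bullet> k = - c * (u \<bullet> u)" using hk by simp
      ultimately have "c = - c * g' x u + c" using uu unfolding c_def by (simp add: field_simps)
      then have "c = 0" using \<open>x \<in> S\<close> unfolding S_def by simp
      then show "k = 0" using hk by simp
    qed
    ultimately show ?thesis by (simp add: linear_injective_0)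
  qed
  have "negligible {x \<in> S. f x \<in> {y. u \<bullet> y = 0}}"
    by (rule negligible_differentiable_vimage[OF negligible_hyperplane[of u 0], where f'=f'])
       (use u inj derf0 has_derivative_at_withinI in blast)+
  moreover have "u \<bullet> f x = g x * (u \<bullet> u)" for x
    unfolding f_def using uu by (simp add: inner_add_right field_simps)
  ultimately show ?thesis using uu g'(2) unfolding S_def by (simp add: conj_commute)
qed

definition G0 :: "real^'d^'m \<Rightarrow> real^'d^'l \<Rightarrow> real^'d \<Rightarrow> real^'d \<Rightarrow> real" where
  "G0 A B v x = ((A *v x) \<bullet> (A *v x)) * ((B *v v) \<bullet> (B *v x)) - ((A *v v) \<bullet> (A *v x)) * ((B *v x) \<bullet> (B *v x))"

definition G1 :: "real^'d^'m \<Rightarrow> real^'d^'l \<Rightarrow> real^'d \<Rightarrow> real^'d \<Rightarrow> real^'d \<Rightarrow> real" where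
  "G1 A B v u x = 2 * ((A *v x) \<bullet> (A *v u)) * ((B *v v) \<bullet> (B *v x)) + ((A *v x) \<bullet> (A *v x)) * ((B *v v) \<bullet> (B *v u))
     - ((A *v v) \<bullet> (A *v u)) * ((B *v x) \<bullet> (B *v x)) - 2 * ((A *v v) \<bullet> (A *v x)) * ((B *v x) \<bullet> (B *v u))"

definition G2 :: "real^'d^'m \<Rightarrow> real^'d^'l \<Rightarrow> real^'d \<Rightarrow> real^'d \<Rightarrow> real^'d \<Rightarrow> real" where
  "G2 A B v u x = 2 * ((A *v u) \<bullet> (A *v u)) * ((B *v v) \<bullet> (B *v x)) + 4 * ((A *v x) \<bullet> (A *v u)) * ((B *v v) \<bullet> (B *v u))
     - 4 * ((A *v v) \<bullet> (A *v u)) * ((B *v x) \<bullet> (B *v u)) - 2 * ((A *v v) \<bullet> (A *v x)) * ((B *v u) \<bullet> (B *v u))"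

lemma G0_der: "\<exists>D. (G0 A B v has_derivative D) (at x) \<and> D u = G1 A B v u x"
  unfolding G0_def G1_def
  apply (intro exI conjI)
   apply (rule derivative_eq_intros refl)+
  apply (simp add: algebra_simps inner_commute)
  done

lemma G1_der: "\<exists>D. (G1 A B v u has_derivative D) (at x) \<and> D u = G2 A B v u x"
  unfolding G2_def G1_def
  apply (intro exI conjI)
   apply (rule derivative_eq_intros refl)+
  apply (simp add: algebra_simps inner_commute)
  done

lemma G2_der: "\<exists>D. (G2 A B v u has_derivative D) (at x) \<and> D u = 6 * G0 A B v u"
  unfolding G2_def G0_def
  apply (intro exI conjI)
   apply (rule derivative_eq_intros refl)+
  apply (simp add: algebra_simps inner_commute)
  done

lemma G0_negl:
  assumes "u \<noteq> 0" "G0 A B v u \<noteq> 0"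
  shows "negligible {x. G0 A B v x = 0}"
proof -
  have "{x. G0 A B v x = 0} \<subseteq> {x. G0 A B v x = 0 \<and> G1 A B v u x \<noteq> 0} \<union> {x. G1 A B v u x = 0 \<and> G2 A B v u x \<noteq> 0}
     \<union> {x. G2 A B v u x = 0 \<and> (\<lambda>_. 6 * G0 A B v u) x \<noteq> 0}"
    using assms by auto
  moreover have "negligible ({x. G0 A B v x = 0 \<and> G1 A B v u x \<noteq> 0} \<union> {x. G1 A B v u x = 0 \<and> G2 A B v u x \<noteq> 0}
     \<union> {x. G2 A B v u x = 0 \<and> (\<lambda>_. 6 * G0 A B v u) x \<noteq> 0})"
    using negl_zero_deriv[OF G0_der assms(1)] negl_zero_deriv[OF G1_der assms(1)] negl_zero_deriv[OF G2_der assms(1)]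
    by (simp only: negligible_Un_eq) blast
  ultimately show ?thesis by (rule negligible_subset[rotated])
qed


lemma mv_continuous_on[continuous_intros]:
  fixes A :: "real^'n^'m"
  shows "continuous_on S f \<Longrightarrow> continuous_on S (\<lambda>x. A *v f x)"
  by (rule bounded_linear.continuous_on[OF matrix_vector_mul_bounded_linear])

lemma G0_cont: "continuous_on S (G0 A B v)"
  unfolding G0_def by (intro continuous_intros)

lemma G0_scale: "G0 A B v (c *\<^sub>R x) = c^3 * G0 A B v x"
  unfolding G0_def by (simp add: matrix_vector_mult_scaleR algebra_simps power3_eq_cube)

theorem mainTheorem12:
  fixes A :: "real^'d^'m" and B :: "real^'d^'l" and v :: "real^'d"
  assumes kerB: "\<forall>x. B *v x = 0 \<longrightarrow> x = 0"
    and v_sphere: "v \<in> sphere 0 1"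
    and not_eig: "\<not> gen_eigvec (transpose A ** A) (transpose B ** B) v"
  shows "AE x in unif_sphere.
           (let a = (norm (A *v v))\<^sup>2; b = inner (A *v v) (A *v x); c = (norm (A *v x))\<^sup>2;
                dv = (norm (B *v v))\<^sup>2; e = inner (B *v v) (B *v x); fx = (norm (B *v x))\<^sup>2;
                alpha = b * dv - a * e; gamma = c * e - b * fx
            in gamma \<noteq> 0 \<and> alpha \<noteq> 0)"
proof -
  define w1 where "w1 = (B *v v) v* B"
  define w2 where "w2 = (A *v v) v* A"
  have e1: "\<And>x. (B *v v) \<bullet> (B *v x) = w1 \<bullet> x" by (simp add: w1_def dot_lmul_matrix)
  have e2: "\<And>x. (A *v v) \<bullet> (A *v x) = w2 \<bullet> x" by (simp add: w2_def dot_lmul_matrix)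
  have v0: "v \<noteq> 0" using v_sphere by auto
  have noeig: "w2 \<noteq> k *\<^sub>R w1" for k
  proof
    assume h: "w2 = k *\<^sub>R w1"
    have "transpose A ** A *v v = w2" "transpose B ** B *v v = w1"
      by (simp_all add: w1_def w2_def matrix_vector_mul_assoc[symmetric] transpose_matrix_vector)
    then have "gen_eigvec (transpose A ** A) (transpose B ** B) v"
      unfolding gen_eigvec_def using v0 h by auto
    then show False using not_eig by simp
  qed
  have Bv: "B *v v \<noteq> 0" using kerB v0 by auto
  have "w1 \<bullet> v > 0" using Bv e1[of v] inner_gt_zero_iff by metis
  then have w10: "w1 \<bullet> w1 \<noteq> 0" by auto
  define u where "u = w2 - ((w2 \<bullet> w1)/(w1 \<bullet> w1)) *\<^sub>R w1"
  have u0: "u \<noteq> 0" using noeig[of "(w2 \<bullet> w1)/(w1 \<bullet> w1)"] unfolding u_def by auto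
  have w1u: "w1 \<bullet> u = 0" unfolding u_def using w10 by (simp add: inner_diff_right inner_commute)
  have w2u: "w2 \<bullet> u = u \<bullet> u"
  proof -
    have "u \<bullet> u = (w2 - ((w2 \<bullet> w1)/(w1 \<bullet> w1)) *\<^sub>R w1) \<bullet> u" using u_def by metis
    also have "\<dots> = w2 \<bullet> u" by (simp add: inner_diff_left w1u)
    finally show ?thesis by simp
  qed
  have Bu: "B *v u \<noteq> 0" using kerB u0 by auto
  have Gu: "G0 A B v u \<noteq> 0"
    unfolding G0_def e1 e2 w1u w2u using u0 Bu by simp
  have negG: "negligible {x. G0 A B v x = 0}" by (rule G0_negl[OF u0 Gu])
  define z where "z = ((B *v v) \<bullet> (B *v v)) *\<^sub>R w2 - ((A *v v) \<bullet> (A *v v)) *\<^sub>R w1"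
  have z0: "z \<noteq> 0"
  proof
    assume "z = 0"
    then have h: "((B *v v) \<bullet> (B *v v)) *\<^sub>R w2 = ((A *v v) \<bullet> (A *v v)) *\<^sub>R w1"
      unfolding z_def by simp
    have d: "(B *v v) \<bullet> (B *v v) \<noteq> 0" using Bv by simp
    have "w2 = (1 / ((B *v v) \<bullet> (B *v v))) *\<^sub>R (((B *v v) \<bullet> (B *v v)) *\<^sub>R w2)"
      using d by simp
    also have "\<dots> = (((A *v v) \<bullet> (A *v v)) / ((B *v v) \<bullet> (B *v v))) *\<^sub>R w1"
      unfolding h by simp
    finally have "w2 = (((A *v v) \<bullet> (A *v v)) / ((B *v v) \<bullet> (B *v v))) *\<^sub>R w1" .
    then show False using noeig by blast
  qed
  define N where "N = {x::real^'d. x = 0 \<or> G0 A B v x = 0 \<or> z \<bullet> x = 0}"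
  have negN: "negligible N"
  proof -
    have "N \<subseteq> {0} \<union> {x. G0 A B v x = 0} \<union> {x. z \<bullet> x = 0}" unfolding N_def by auto
    moreover have "negligible ({0} \<union> {x. G0 A B v x = 0} \<union> {x. z \<bullet> x = 0})"
      using negG negligible_hyperplane[of z 0] z0 by simp
    ultimately show ?thesis using negligible_subset by blast
  qed
  have clC: "closed {x. G0 A B v x = 0 \<or> z \<bullet> x = 0}"
    unfolding Collect_disj_eq
    by (intro closed_Un closed_Collect_eq G0_cont continuous_intros)
  have "N = {x. x = 0} \<union> {x. G0 A B v x = 0 \<or> z \<bullet> x = 0}" unfolding N_def by auto
  then have Nb: "N \<in> sets borel"
    using clC by (simp add: borel_closed closed_Un)
  have Nnull: "N \<in> null_sets lborel"
    using negN Nb by (simp add: negligible_iff_null_sets null_sets_completion_iff)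
  have ae1: "AE x in lborel. x \<notin> N" using AE_not_in[OF Nnull] .
  have ae2: "AE x in uniform_measure lborel (ball 0 1). x \<notin> N"
    by (rule AE_uniform_measureI) (auto intro: eventually_mono[OF ae1])
  have P: "(let a = (norm (A *v v))\<^sup>2; b = inner (A *v v) (A *v y); c = (norm (A *v y))\<^sup>2;
                dv = (norm (B *v v))\<^sup>2; e = inner (B *v v) (B *v y); fx = (norm (B *v y))\<^sup>2;
                alpha = b * dv - a * e; gamma = c * e - b * fx
            in gamma \<noteq> 0 \<and> alpha \<noteq> 0) \<longleftrightarrow> (G0 A B v y \<noteq> 0 \<and> z \<bullet> y \<noteq> 0)" for y
    unfolding Let_def G0_def z_def power2_norm_eq_inner
    by (simp add: inner_diff_left e1 e2 algebra_simps)
  have meas: "(\<lambda>x::real^'d. x /\<^sub>R norm x) \<in> uniform_measure lborel (ball 0 1) \<rightarrow>\<^sub>M borel"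
    by (simp add: measurable_cong_sets[OF sets_uniform_measure refl]) measurable
  show ?thesis
    unfolding unif_sphere_def P
    apply (subst AE_distr_iff[OF meas])
     apply (subgoal_tac "{x \<in> space borel. G0 A B v x \<noteq> 0 \<and> z \<bullet> x \<noteq> 0} = space borel - {x. G0 A B v x = 0 \<or> z \<bullet> x = 0}")
      apply (simp add: borel_closed clC sets.compl_sets)
     apply auto[1]
    apply (rule eventually_mono[OF ae2])
    apply (auto simp: N_def G0_scale)
    done
qed

end
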